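(* Consider the stochastic bipartite matching model described in the context, under the stability condition, with stationary distribution $\pi$. For $\mathcal{A}\in\mathcal{J}_0$ define $\ell_{\mathcal{I}}(\mathcal{A})=\sum_{(c,d)\in\Pi_{\mathcal{A}}}|c|\,\pi(c,d)$ (so that $\ell_{\mathcal{I}}(\mathcal{A})/\pi(\mathcal{A})$ is the stationary mean number of unmatched customers given that the set of unmatched classes is $\mathcal{A}$), with the convention $\ell_{\mathcal{I}}(\mathcal{A})=0$ if $\mathcal{A}\notin\mathcal{J}_0$. Then the stationary mean number of unmatched customers is $L_{\mathcal{I}}=\sum_{\mathcal{A}\in\mathcal{J}_0}\ell_{\mathcal{I}}(\mathcal{A})$, $\ell_{\mathcal{I}}(\emptyset)=0$, and for each $\mathcal{A}\in\mathcal{J}$, \[ \begin{aligned} \Delta(\mathcal{A})\,\ell_{\mathcal{I}}(\mathcal{A}) ={}& \mu(\mathcal{K}(\mathcal{A}\cap\mathcal{I}))\,\lambda(\mathcal{I}(\mathcal{A}\cap\mathcal{K}))\,\pi(\mathcal{A}) + \mu(\mathcal{A}\cap\mathcal{K})\sum_{i\in\mathcal{A}\cap\mathcal{I}}\lambda_i\,\ell_{\mathcal{I}}(\mathcal{A}\setminus\{i\})\\ &+\lambda(\mathcal{A}\cap\mathcal{I})\sum_{k\in\mathcal{A}\cap\mathcal{K}}\mu_k\,\ell_{\mathcal{I}}(\mathcal{A}\setminus\{k\}) + \sum_{i\in\mathcal{A}\cap\mathcal{I}}\sum_{k\in\mathcal{A}\cap\mathcal{K}}\lambda_i\mu_k\,\ell_{\mathcal{I}}(\mathcal{A}\setminus\{i,k\}).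 \end{aligned} \]
   Context: Let $\mathcal{I}$ (customer classes) and $\mathcal{K}$ (server classes) be disjoint finite non-empty sets, and consider a connected bipartite graph (the compatibility graph) on $\mathcal{I}\cup\mathcal{K}$ whose edges all join an element of $\mathcal{I}$ to an element of $\mathcal{K}$; write $i\sim k$ if $i\in\mathcal{I}$ and $k\in\mathcal{K}$ are adjacent and $i\nsim k$ otherwise. For $i\in\mathcal{I}$ let $\mathcal{K}_i=\{k\in\mathcal{K}: i\sim k\}$ and for $k\in\mathcal{K}$ let $\mathcal{I}_k=\{i\in\mathcal{I}: i\sim k\}$. Let $\lambda_i>0$ ($i\in\mathcal{I}$) and $\mu_k>0$ ($k\in\mathcal{K}$) with $\sum_i\lambda_i=\sum_k\mu_k=1$. For $\mathcal{A}\subseteq\mathcal{I}$ write $\lambda(\mathcal{A})=\sum_{i\in\mathcal{A}}\lambda_i$ and $\mathcal{K}(\mathcal{A})=\bigcup_{i\in\mathcal{A}}\mathcal{K}_i$; for $\mathcal{A}\subseteq\mathcal{K}$ write $\mu(\mathcal{A})=\sum_{k\in\mathcal{A}}\mu_k$ and $\mathcal{I}(\mathcal{A})=\bigcup_{k\in\mathcal{A}}\mathcal{I}_k$. Model: time is slotted; in each slot exactly one customer and one server arrive, the customer being of class $i$ with probability $\lambda_i$ and the server of class $k$ with probability $\mu_k$, independently within and across slots. Unmatched customers and unmatched servers wait in two queues in arrival order. Upon each arrival (first-come-first-matched policy): (1) the incoming customer is matched with the longest-waiting compatible unmatched server, if any; (2) the incoming server is matched with the longest-waiting compatible unmatched customer,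 if any; (3) if neither can be matched with a waiting item, they are matched with each other if compatible; (4) any incoming item still unmatched is appended to the back of its queue. Matched items leave immediately. The state is $(c,d)$ with $c=(c_1,\dots,c_n)$ the classes of unmatched customers and $d=(d_1,\dots,d_n)$ the classes of unmatched servers, in arrival order (the two lengths are always equal); the state space is $\Pi=\bigcup_{n\ge0}\{(c,d)\in\mathcal{I}^n\times\mathcal{K}^n: c_p\nsim d_q\ \forall p,q\}$, and $\varnothing$ denotes the empty state. For a sequence $c$, $|c|$ denotes its length. Stability condition (assumed): $\lambda(\mathcal{A})<\mu(\mathcal{K}(\mathcal{A}))$ for every non-empty $\mathcal{A}\subsetneq\mathcal{I}$ (equivalently $\mu(\mathcal{A})<\lambda(\mathcal{I}(\mathcal{A}))$ for every non-empty $\mathcal{A}\subsetneq\mathcal{K}$). Then the Markov chain of states is ergodic with stationary distribution $\pi(c,d)=\pi(\varnothing)\prod_{p=1}^n \frac{\lambda_{c_p}}{\mu(\mathcal{K}(\{c_1,\dots,c_p\}))}\frac{\mu_{d_p}}{\lambda(\mathcal{I}(\{d_1,\dots,d_p\}))}$, $(c,d)\in\Pi$. Let $\mathcal{J}$ be the family of independent sets $\mathcal{A}\subseteq\mathcal{I}\cup\mathcal{K}$ of the compatibility graph such that $\mathcal{A}\cap\mathcal{I}$ and $\mathcal{A}\cap\mathcal{K}$ are both non-empty, and $\mathcal{J}_0=\mathcal{J}\cup\{\emptyset\}$. For $\mathcal{A}\in\mathcal{J}_0$, let $\Pi_{\mathcal{A}}$ be the set of $(c,d)\in\Pi$ with $\{c_1,\dots,c_n\}=\mathcal{A}\cap\mathcal{I}$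 and $\{d_1,\dots,d_n\}=\mathcal{A}\cap\mathcal{K}$, and $\pi(\mathcal{A})=\sum_{(c,d)\in\Pi_{\mathcal{A}}}\pi(c,d)$; by convention $\pi(\mathcal{A})=0$ if $\mathcal{A}\notin\mathcal{J}_0$. For $\mathcal{A}\in\mathcal{J}$, $\Delta(\mathcal{A})=\mu(\mathcal{K}(\mathcal{A}\cap\mathcal{I}))\,\lambda(\mathcal{I}(\mathcal{A}\cap\mathcal{K}))-\lambda(\mathcal{A}\cap\mathcal{I})\,\mu(\mathcal{A}\cap\mathcal{K})$. *)

theory Defs
  imports "HOL-Analysis.Analysis"
begin

text \<open>Customer classes I and server classes K are disjoint finite subsets of one
type 'a. The compatibility graph is given by E: E i k means i \<in> I and k \<in> K are adjacent.
lam and mu are the arrival probabilities (only their values on I, resp. K, matter).\<close>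

definition Kof :: "('a \<Rightarrow> 'a \<Rightarrow> bool) \<Rightarrow> 'a set \<Rightarrow> 'a set \<Rightarrow> 'a set" where
  "Kof E K A = {k \<in> K. \<exists>i\<in>A. E i k}"

definition Iof :: "('a \<Rightarrow> 'a \<Rightarrow> bool) \<Rightarrow> 'a set \<Rightarrow> 'a set \<Rightarrow> 'a set" where
  "Iof E I B = {i \<in> I. \<exists>k\<in>B. E i k}"

definition states :: "'a set \<Rightarrow> 'a set \<Rightarrow> ('a \<Rightarrow> 'a \<Rightarrow> bool) \<Rightarrow> ('a list \<times> 'a list) set" where
  "states I K E = {(c, d). length c = length d \<and> set c \<subseteq> I \<and> set d \<subseteq> K \<and>
      (\<forall>p\<in>set c. \<forall>q\<in>set d. \<not> E p q)}"

definition pi_un :: "'a set \<Rightarrow> 'a set \<Rightarrow> ('a \<Rightarrow> 'a \<Rightarrow> bool) \<Rightarrow> ('a \<Rightarrow> real) \<Rightarrow> ('a \<Rightarrow> real)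
    \<Rightarrow> 'a list \<times> 'a list \<Rightarrow> real" where
  "pi_un I K E lam mu s = (case s of (c, d) \<Rightarrow>
     (\<Prod>p<length c. lam (c ! p) / sum mu (Kof E K (set (take (Suc p) c)))
                  * (mu (d ! p) / sum lam (Iof E I (set (take (Suc p) d))))))"

definition pi_st :: "'a set \<Rightarrow> 'a set \<Rightarrow> ('a \<Rightarrow> 'a \<Rightarrow> bool) \<Rightarrow> ('a \<Rightarrow> real) \<Rightarrow> ('a \<Rightarrow> real)
    \<Rightarrow> 'a list \<times> 'a list \<Rightarrow> real" where
  "pi_st I K E lam mu s =
     pi_un I K E lam mu s / (\<Sum>\<^sub>\<infinity> t\<in>states I K E. pi_un I K E lam mu t)"

definition Jfam :: "'a set \<Rightarrow> 'a set \<Rightarrow> ('a \<Rightarrow> 'a \<Rightarrow> bool) \<Rightarrow> 'a set set" where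
  "Jfam I K E = {A. A \<subseteq> I \<union> K \<and> (\<forall>x\<in>A. \<forall>y\<in>A. \<not> E x y)
                   \<and> A \<inter> I \<noteq> {} \<and> A \<inter> K \<noteq> {}}"

definition J0fam :: "'a set \<Rightarrow> 'a set \<Rightarrow> ('a \<Rightarrow> 'a \<Rightarrow> bool) \<Rightarrow> 'a set set" where
  "J0fam I K E = insert {} (Jfam I K E)"

definition states_of :: "'a set \<Rightarrow> 'a set \<Rightarrow> ('a \<Rightarrow> 'a \<Rightarrow> bool) \<Rightarrow> 'a set
    \<Rightarrow> ('a list \<times> 'a list) set" where
  "states_of I K E A = {(c, d) \<in> states I K E. set c = A \<inter> I \<and> set d = A \<inter> K}"

definition pi_set :: "'a set \<Rightarrow> 'a set \<Rightarrow> ('a \<Rightarrow> 'a \<Rightarrow> bool) \<Rightarrow> ('a \<Rightarrow> real) \<Rightarrow> ('a \<Rightarrow> real)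
    \<Rightarrow> 'a set \<Rightarrow> real" where
  "pi_set I K E lam mu A = (if A \<in> J0fam I K E
      then (\<Sum>\<^sub>\<infinity> s\<in>states_of I K E A. pi_st I K E lam mu s) else 0)"

definition ell_I :: "'a set \<Rightarrow> 'a set \<Rightarrow> ('a \<Rightarrow> 'a \<Rightarrow> bool) \<Rightarrow> ('a \<Rightarrow> real) \<Rightarrow> ('a \<Rightarrow> real)
    \<Rightarrow> 'a set \<Rightarrow> real" where
  "ell_I I K E lam mu A = (if A \<in> J0fam I K E
      then (\<Sum>\<^sub>\<infinity> s\<in>states_of I K E A. real (length (fst s)) * pi_st I K E lam mu s) else 0)"

definition L_I :: "'a set \<Rightarrow> 'a set \<Rightarrow> ('a \<Rightarrow> 'a \<Rightarrow> bool) \<Rightarrow> ('a \<Rightarrow> real) \<Rightarrow> ('a \<Rightarrow> real) \<Rightarrow> real" where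
  "L_I I K E lam mu = (\<Sum>\<^sub>\<infinity> s\<in>states I K E. real (length (fst s)) * pi_st I K E lam mu s)"

definition Delta :: "'a set \<Rightarrow> 'a set \<Rightarrow> ('a \<Rightarrow> 'a \<Rightarrow> bool) \<Rightarrow> ('a \<Rightarrow> real) \<Rightarrow> ('a \<Rightarrow> real)
    \<Rightarrow> 'a set \<Rightarrow> real" where
  "Delta I K E lam mu A =
     sum mu (Kof E K (A \<inter> I)) * sum lam (Iof E I (A \<inter> K)) - sum lam (A \<inter> I) * sum mu (A \<inter> K)"

end

theory Submission
  imports Defs
begin

definition lists_eq :: "nat \<Rightarrow> 'a set \<Rightarrow> 'a list set" where
  "lists_eq n B = {c. length c = n \<and> set c = B}"

definition fw :: "('a \<Rightarrow> real) \<Rightarrow> ('a set \<Rightarrow> real) \<Rightarrow> 'a list \<Rightarrow> real" where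
  "fw w h c = (\<Prod>p<length c. w (c ! p) / h (set (take (Suc p) c)))"

definition FF :: "('a \<Rightarrow> real) \<Rightarrow> ('a set \<Rightarrow> real) \<Rightarrow> nat \<Rightarrow> 'a set \<Rightarrow> real" where
  "FF w h n B = sum (fw w h) (lists_eq n B)"

lemma finite_lists_eq: "finite B \<Longrightarrow> finite (lists_eq n B)"
  unfolding lists_eq_def
  by (rule finite_subset[OF _ finite_lists_length_eq[of B n]]) auto

lemma fw_snoc: "fw w h (c @ [x]) = fw w h c * (w x / h (insert x (set c)))"
proof -
  have "fw w h (c @ [x]) = (\<Prod>p<Suc (length c). w ((c @ [x]) ! p) / h (set (take (Suc p) (c @ [x]))))"
    by (simp add: fw_def)
  also have "\<dots> = (\<Prod>p<length c. w ((c @ [x]) ! p) / h (set (take (Suc p) (c @ [x]))))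
       * (w x / h (insert x (set c)))"
    by (simp add: prod.lessThan_Suc nth_append)
  also have "(\<Prod>p<length c. w ((c @ [x]) ! p) / h (set (take (Suc p) (c @ [x])))) = fw w h c"
    unfolding fw_def by (rule prod.cong) (auto simp: nth_append)
  finally show ?thesis .
qed

lemma fw_nonneg:
  assumes "set c \<subseteq> B" "\<And>x. x \<in> B \<Longrightarrow> 0 \<le> w x" "\<And>S. 0 \<le> h S"
  shows "0 \<le> fw w h c"
  unfolding fw_def
proof (intro prod_nonneg divide_nonneg_nonneg)
  fix p assume "p \<in> {..<length c}"
  then have "c ! p \<in> B" using assms(1) by (meson lessThan_iff nth_mem subsetD)
  then show "0 \<le> w (c ! p)" by (rule assms(2))
qed (rule assms(3))

lemma FF_nonneg:
  assumes "\<And>x. x \<in> B \<Longrightarrow> 0 \<le> w x" "\<And>S. 0 \<le> h S"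
  shows "0 \<le> FF w h n B"
  unfolding FF_def lists_eq_def using assms by (intro sum_nonneg fw_nonneg) auto

lemma FF_0: "FF w h 0 B = (if B = {} then 1 else 0)"
proof -
  have "lists_eq 0 B = (if B = {} then {[]} else {})" by (auto simp: lists_eq_def)
  then show ?thesis by (simp add: FF_def fw_def)
qed

lemma lists_eq_Suc:
  "lists_eq (Suc n) B = (\<lambda>(x,c). c @ [x]) ` (SIGMA x:B. lists_eq n B \<union> lists_eq n (B - {x}))"
proof (rule set_eqI, rule iffI)
  fix c' assume "c' \<in> lists_eq (Suc n) B"
  then have l: "length c' = Suc n" and s: "set c' = B" by (auto simp: lists_eq_def)
  then have "c' \<noteq> []" by auto
  then have e: "c' = butlast c' @ [last c']" by simp
  have "last c' \<in> B" using s \<open>c' \<noteq> []\<close> by auto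
  moreover have "butlast c' \<in> lists_eq n B \<union> lists_eq n (B - {last c'})"
  proof -
    have "set c' = set (butlast c' @ [last c'])" using e by simp
    then have "insert (last c') (set (butlast c')) = B" using s by simp
    then have "set (butlast c') = B \<or> set (butlast c') = B - {last c'}" by auto
    then show ?thesis using l by (auto simp: lists_eq_def)
  qed
  ultimately show "c' \<in> (\<lambda>(x,c). c @ [x]) ` (SIGMA x:B. lists_eq n B \<union> lists_eq n (B - {x}))"
    using e by (intro image_eqI[of _ _ "(last c', butlast c')"]) simp_all
next
  fix c' assume "c' \<in> (\<lambda>(x,c). c @ [x]) ` (SIGMA x:B. lists_eq n B \<union> lists_eq n (B - {x}))"
  then obtain p where p: "p \<in> (SIGMA x:B. lists_eq n B \<union> lists_eq n (B - {x}))"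
    and e0: "c' = (\<lambda>(x,c). c @ [x]) p" by (rule imageE)
  obtain x c where pxc: "p = (x, c)" by (cases p)
  have x: "x \<in> B" and c: "c \<in> lists_eq n B \<union> lists_eq n (B - {x})" using p pxc by simp_all
  have e: "c' = c @ [x]" using e0 pxc by simp
  from c have "length c = n" "set c = B \<or> set c = B - {x}" unfolding lists_eq_def by blast+
  then have "length c' = Suc n" "set c' = B" using x e by auto
  then show "c' \<in> lists_eq (Suc n) B" unfolding lists_eq_def by blast
qed

lemma FF_Suc:
  assumes "finite B"
  shows "FF w h (Suc n) B = (\<Sum>x\<in>B. w x / h B * (FF w h n B + FF w h n (B - {x})))"
proof -
  have inj: "inj_on (\<lambda>(x,c). c @ [x]) (SIGMA x:B. lists_eq n B \<union> lists_eq n (B - {x}))"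
    by (auto simp: inj_on_def)
  have "FF w h (Suc n) B = (\<Sum>(x,c)\<in>(SIGMA x:B. lists_eq n B \<union> lists_eq n (B - {x})). fw w h (c @ [x]))"
    unfolding FF_def lists_eq_Suc by (subst sum.reindex[OF inj]) (simp add: case_prod_unfold)
  also have "\<dots> = (\<Sum>x\<in>B. \<Sum>c\<in>lists_eq n B \<union> lists_eq n (B - {x}). fw w h (c @ [x]))"
    using assms by (subst sum.Sigma) (auto simp: finite_lists_eq)
  also have "\<dots> = (\<Sum>x\<in>B. w x / h B * (FF w h n B + FF w h n (B - {x})))"
  proof (rule sum.cong[OF refl])
    fix x assume x: "x \<in> B"
    have d: "lists_eq n B \<inter> lists_eq n (B - {x}) = {}" using x by (auto simp: lists_eq_def)
    have "(\<Sum>c\<in>lists_eq n B \<union> lists_eq n (B - {x}). fw w h (c @ [x]))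
       = (\<Sum>c\<in>lists_eq n B \<union> lists_eq n (B - {x}). fw w h c * (w x / h B))"
    proof (rule sum.cong[OF refl])
      fix c assume "c \<in> lists_eq n B \<union> lists_eq n (B - {x})"
      then have "insert x (set c) = B" using x by (auto simp: lists_eq_def)
      then show "fw w h (c @ [x]) = fw w h c * (w x / h B)" by (simp add: fw_snoc)
    qed
    also have "\<dots> = w x / h B * (FF w h n B + FF w h n (B - {x}))"
      unfolding FF_def using assms d
      by (simp add: sum.union_disjoint finite_lists_eq sum_distrib_left sum_distrib_right algebra_simps)
    finally show "(\<Sum>c\<in>lists_eq n B \<union> lists_eq n (B - {x}). fw w h (c @ [x])) = w x / h B * (FF w h n B + FF w h n (B - {x}))" .
  qed
  finally show ?thesis .
qed

lemma FF_Suc_mult: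
  assumes "finite B" "B \<noteq> {} \<Longrightarrow> h B \<noteq> 0"
  shows "h B * FF w h (Suc n) B = (\<Sum>x\<in>B. w x * (FF w h n B + FF w h n (B - {x})))"
proof (cases "B = {}")
  case True then show ?thesis by (simp add: FF_Suc)
next
  case False
  then show ?thesis using assms by (simp add: FF_Suc sum_distrib_left)
qed

lemma FF_Suc_empty: "FF w h (Suc n) {} = 0"
  by (simp add: FF_Suc)

lemma geo1:
  fixes x R :: "nat \<Rightarrow> real"
  assumes x0: "\<And>n. 0 \<le> x n" and R0: "\<And>n. 0 \<le> R n" and xz: "x 0 = 0"
    and rec: "\<And>n. D * x (Suc n) = \<rho> * x n + R n"
    and rho: "0 \<le> \<rho>" "\<rho> < D" and sR: "summable R"
  shows "summable x \<and> D * suminf x = \<rho> * suminf x + suminf R"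
proof -
  have bnd: "(\<Sum>i<N. x i) \<le> suminf R / (D - \<rho>)" for N
  proof (cases N)
    case 0 then show ?thesis using rho suminf_nonneg[OF sR R0] by simp
  next
    case (Suc M)
    have s1: "(\<Sum>i<Suc M. x i) = (\<Sum>i<M. x (Suc i))"
      by (subst sum.lessThan_Suc_shift) (simp add: xz)
    have "D * (\<Sum>i<M. x (Suc i)) = \<rho> * (\<Sum>i<M. x i) + (\<Sum>i<M. R i)"
      by (simp add: sum_distrib_left rec sum.distrib)
    also have "(\<Sum>i<M. x i) \<le> (\<Sum>i<M. x (Suc i))"
    proof -
      have "(\<Sum>i<M. x i) \<le> (\<Sum>i<Suc M. x i)" using x0 by simp
      then show ?thesis using s1 by simp
    qed
    then have "\<rho> * (\<Sum>i<M. x i) \<le> \<rho> * (\<Sum>i<M. x (Suc i))" using rho by (simp add: mult_left_mono)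
    moreover have "(\<Sum>i<M. R i) \<le> suminf R" using sR R0 by (intro sum_le_suminf) auto
    ultimately have "D * (\<Sum>i<M. x (Suc i)) \<le> \<rho> * (\<Sum>i<M. x (Suc i)) + suminf R" by linarith
    then have "(D - \<rho>) * (\<Sum>i<M. x (Suc i)) \<le> suminf R" by (simp add: algebra_simps)
    then show ?thesis using Suc s1 rho by (simp add: pos_le_divide_eq mult.commute)
  qed
  have sx: "summable x" by (rule summableI_nonneg_bounded[OF x0 bnd])
  have "D * suminf x = D * (\<Sum>n. x (Suc n))" using suminf_split_head[OF sx] xz by simp
  also have "\<dots> = (\<Sum>n. D * x (Suc n))"
  proof -
    have "summable (\<lambda>n. x (Suc n))" using sx by (simp add: summable_Suc_iff)
    then show ?thesis by (rule suminf_mult[symmetric])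
  qed
  also have "\<dots> = (\<Sum>n. \<rho> * x n + R n)" by (simp add: rec)
  also have "\<dots> = (\<Sum>n. \<rho> * x n) + suminf R"
    by (rule suminf_add[symmetric]) (use sx sR in \<open>auto intro: summable_mult\<close>)
  also have "(\<Sum>n. \<rho> * x n) = \<rho> * suminf x" by (rule suminf_mult[OF sx])
  finally show ?thesis using sx by simp
qed

lemma geo2:
  fixes x R :: "nat \<Rightarrow> real"
  assumes x0: "\<And>n. 0 \<le> x n" and R0: "\<And>n. 0 \<le> R n" and xz: "x 0 = 0"
    and rec: "\<And>n. D * x (Suc n) = \<rho> * x n + R n"
    and rho: "0 \<le> \<rho>" "\<rho> < D" and sR: "summable R" and snR: "summable (\<lambda>n. real n * R n)"
  shows "summable x" "summable (\<lambda>n. real n * x n)"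
    "D * suminf x = \<rho> * suminf x + suminf R"
    "(D - \<rho>) * (\<Sum>n. real n * x n) = D * suminf x + (\<Sum>n. real n * R n)"
proof -
  from geo1[OF x0 R0 xz rec rho sR] have sx: "summable x" and e1: "D * suminf x = \<rho> * suminf x + suminf R" by auto
  show "summable x" "D * suminf x = \<rho> * suminf x + suminf R" using sx e1 by auto
  define R' where "R' n = \<rho> * x n + (real n * R n + R n)" for n
  have sR': "summable R'" unfolding R'_def using sx sR snR by (intro summable_add summable_mult) auto
  have g: "summable (\<lambda>n. real n * x n) \<and> D * (\<Sum>n. real n * x n) = \<rho> * (\<Sum>n. real n * x n) + suminf R'"
  proof (rule geo1)
    show "0 \<le> real n * x n" for n using x0 by simp
    show "0 \<le> R' n" for n using x0 R0 rho by (simp add: R'_def)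
    show "real 0 * x 0 = 0" by simp
    show "D * (real (Suc n) * x (Suc n)) = \<rho> * (real n * x n) + R' n" for n
    proof -
      have "D * (real (Suc n) * x (Suc n)) = real (Suc n) * (D * x (Suc n))" by simp
      also have "\<dots> = real (Suc n) * (\<rho> * x n + R n)" by (simp add: rec)
      finally show ?thesis by (simp add: R'_def algebra_simps)
    qed
  qed (use rho sR' in auto)
  then show "summable (\<lambda>n. real n * x n)" by simp
  have "suminf R' = \<rho> * suminf x + ((\<Sum>n. real n * R n) + suminf R)"
  proof -
    have a: "summable (\<lambda>n. \<rho> * x n)" using sx by (rule summable_mult)
    have b: "summable (\<lambda>n. real n * R n + R n)" using snR sR by (rule summable_add)
    have "suminf R' = (\<Sum>n. \<rho> * x n) + (\<Sum>n. real n * R n + R n)"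
      unfolding R'_def by (rule suminf_add[OF a b, symmetric])
    also have "(\<Sum>n. \<rho> * x n) = \<rho> * suminf x" by (rule suminf_mult[OF sx])
    also have "(\<Sum>n. real n * R n + R n) = (\<Sum>n. real n * R n) + suminf R"
      by (rule suminf_add[OF snR sR, symmetric])
    finally show ?thesis .
  qed
  then show "(D - \<rho>) * (\<Sum>n. real n * x n) = D * suminf x + (\<Sum>n. real n * R n)"
    using g e1 by (simp add: algebra_simps)
qed

lemma has_sum_slices:
  fixes g :: "'b \<Rightarrow> real"
  assumes nn: "\<And>x. x \<in> S \<Longrightarrow> 0 \<le> g x" and fin: "\<And>n. finite (T n)"
    and disj: "\<And>m n. m \<noteq> n \<Longrightarrow> T m \<inter> T n = {}" and S: "S = (\<Union>n. T n)"
    and sm: "(\<lambda>n. sum g (T n)) sums s"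
  shows "(g has_sum s) S"
proof -
  have Y0: "0 \<le> sum g (T n)" for n using nn S by (intro sum_nonneg) auto
  have bdd: "sum g F \<le> s" if F: "finite F" "F \<subseteq> S" for F
  proof -
    have "\<forall>x\<in>F. \<exists>n. x \<in> T n" using F S by auto
    then obtain N where N: "\<And>x. x \<in> F \<Longrightarrow> x \<in> T (N x)" by metis
    define M where "M = Suc (Max (N ` F))"
    have FM: "F \<subseteq> (\<Union>n\<in>{..<M}. T n)"
    proof
      fix x assume x: "x \<in> F"
      then have "N x \<le> Max (N ` F)" using F(1) by simp
      then show "x \<in> (\<Union>n\<in>{..<M}. T n)" using N[OF x] by (auto simp: M_def)
    qed
    have "sum g F \<le> sum g (\<Union>n\<in>{..<M}. T n)"
      using FM nn S fin by (intro sum_mono2) auto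
    also have "\<dots> = (\<Sum>n<M. sum g (T n))"
      using fin disj by (intro sum.UNION_disjoint) auto
    also have "\<dots> \<le> s" proof -
      have "summable (\<lambda>n. sum g (T n))" and "s = (\<Sum>n. sum g (T n))" using sm by (auto simp: sums_iff)
      then show ?thesis using Y0 by (simp add: sum_le_suminf)
    qed
    finally show ?thesis .
  qed
  have summ: "g summable_on S"
    using nn bdd by (intro nonneg_bdd_above_summable_on) (auto intro!: bdd_aboveI)
  have inj: "inj_on snd (SIGMA n:UNIV. T n)" using disj by (auto simp: inj_on_def)
  have img: "snd ` (SIGMA n:UNIV. T n) = S" using S by force
  have s2: "(g \<circ> snd) summable_on (SIGMA n:UNIV. T n)"
    using summ summable_on_reindex[OF inj, of g] img by simp
  have "infsum (g \<circ> snd) (SIGMA n:UNIV. T n) = infsum (\<lambda>n. infsum (\<lambda>y. (g \<circ> snd) (n,y)) (T n)) UNIV"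
    using infsum_Sigma_banach[OF s2] by simp
  also have "\<dots> = infsum (\<lambda>n. sum g (T n)) UNIV" using fin by simp
  also have "\<dots> = s" using sums_nonneg_imp_has_sum[OF sm Y0] by (simp add: infsumI)
  finally have "infsum g S = s" using infsum_reindex[OF inj, of g] img by simp
  then show ?thesis using has_sum_infsum[OF summ] by simp
qed



locale model =
  fixes I K :: "'a set" and E :: "'a \<Rightarrow> 'a \<Rightarrow> bool" and lam mu :: "'a \<Rightarrow> real"
  assumes finI: "finite I" and finK: "finite K"
    and neI: "I \<noteq> {}" and neK: "K \<noteq> {}" and disj: "I \<inter> K = {}"
    and bip: "\<And>x y. E x y \<Longrightarrow> x \<in> I \<and> y \<in> K"
    and conn: "\<And>x y. x \<in> I \<union> K \<Longrightarrow> y \<in> I \<union> K \<Longrightarrow> (\<lambda>u v. E u v \<or> E v u)\<^sup>*\<^sup>* x y"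
    and lam_pos: "\<And>i. i \<in> I \<Longrightarrow> lam i > 0" and mu_pos: "\<And>k. k \<in> K \<Longrightarrow> mu k > 0"
    and lam_sum: "sum lam I = 1" and mu_sum: "sum mu K = 1"
    and stab: "\<And>A. A \<noteq> {} \<Longrightarrow> A \<subset> I \<Longrightarrow> sum lam A < sum mu (Kof E K A)"
begin

abbreviation hI where "hI \<equiv> (\<lambda>S. sum mu (Kof E K S))"
abbreviation hK where "hK \<equiv> (\<lambda>S. sum lam (Iof E I S))"

definition indep :: "'a set \<Rightarrow> bool" where
  "indep A \<longleftrightarrow> A \<subseteq> I \<union> K \<and> (\<forall>x\<in>A. \<forall>y\<in>A. \<not> E x y)"

lemma nbrI: assumes i: "i \<in> I" shows "\<exists>k\<in>K. E i k"
proof -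
  obtain k0 where k0: "k0 \<in> K" using neK by auto
  have "(\<lambda>u v. E u v \<or> E v u)\<^sup>*\<^sup>* i k0" using conn i k0 by auto
  then show ?thesis
  proof (cases rule: converse_rtranclpE)
    case base then show ?thesis using i k0 disj by auto
  next
    case (step y)
    then have "E i y \<or> E y i" by simp
    then show ?thesis
    proof
      assume "E i y" then show ?thesis using bip by blast
    next
      assume "E y i" then have "i \<in> K" using bip by blast
      then show ?thesis using i disj by auto
    qed
  qed
qed

lemma nbrK: assumes k: "k \<in> K" shows "\<exists>i\<in>I. E i k"
proof -
  obtain i0 where i0: "i0 \<in> I" using neI by auto
  have "(\<lambda>u v. E u v \<or> E v u)\<^sup>*\<^sup>* k i0" using conn k i0 by auto
  then show ?thesis
  proof (cases rule: converse_rtranclpE)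
    case base then show ?thesis using k i0 disj by auto
  next
    case (step y)
    then have "E k y \<or> E y k" by simp
    then show ?thesis
    proof
      assume "E y k" then show ?thesis using bip by blast
    next
      assume "E k y" then have "k \<in> I" using bip by blast
      then show ?thesis using k disj by auto
    qed
  qed
qed

lemma Kof_sub: "Kof E K S \<subseteq> K" by (auto simp: Kof_def)
lemma Iof_sub: "Iof E I S \<subseteq> I" by (auto simp: Iof_def)

lemma hI_nonneg: "0 \<le> hI S"
  using Kof_sub mu_pos by (intro sum_nonneg) (auto intro: less_imp_le)
lemma hK_nonneg: "0 \<le> hK S"
  using Iof_sub lam_pos by (intro sum_nonneg) (auto intro: less_imp_le)

lemma hI_pos: assumes "B \<subseteq> I" "B \<noteq> {}" shows "0 < hI B"
proof -
  obtain i where i: "i \<in> B" using assms by auto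
  then obtain k where k: "k \<in> K" "E i k" using nbrI assms by blast
  have "k \<in> Kof E K B" using i k by (auto simp: Kof_def)
  moreover have "finite (Kof E K B)" using finK Kof_sub by (rule finite_subset[rotated])
  ultimately show ?thesis using mu_pos k Kof_sub
    by (intro sum_pos2[of _ k]) (auto intro: less_imp_le)
qed

lemma hK_pos: assumes "C \<subseteq> K" "C \<noteq> {}" shows "0 < hK C"
proof -
  obtain k where k: "k \<in> C" using assms by auto
  then obtain i where i: "i \<in> I" "E i k" using nbrK assms by blast
  have "i \<in> Iof E I C" using i k by (auto simp: Iof_def)
  moreover have "finite (Iof E I C)" using finI Iof_sub by (rule finite_subset[rotated])
  ultimately show ?thesis using lam_pos i Iof_sub
    by (intro sum_pos2[of _ i]) (auto intro: less_imp_le)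
qed

lemma stabK: assumes C: "C \<noteq> {}" "C \<subset> K" shows "sum mu C < hK C"
proof -
  define B' where "B' = I - Iof E I C"
  have finC: "finite C" using C finK finite_subset by auto
  have sub: "Kof E K B' \<subseteq> K - C" by (auto simp: Kof_def B'_def Iof_def dest: bip)
  have muKC: "sum mu (K - C) = 1 - sum mu C" using C finK mu_sum by (simp add: sum_diff)
  have hB': "hI B' \<le> 1 - sum mu C"
    using sub muKC mu_pos finK by (metis sum_mono2 finite_Diff Diff_iff less_imp_le)
  have lamB': "sum lam B' = 1 - hK C" unfolding B'_def using finI lam_sum Iof_sub by (simp add: sum_diff)
  show ?thesis
  proof (cases "B' = {}")
    case True
    then have "Iof E I C = I" using Iof_sub B'_def by auto
    then have "hK C = 1" using lam_sum by simp
    moreover obtain k where k: "k \<in> K" "k \<notin> C" using C by auto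
    have "mu k \<le> sum mu (K - C)" using k finK mu_pos by (intro member_le_sum) (auto intro: less_imp_le)
    then have "sum mu C < 1" using muKC mu_pos[OF k(1)] by linarith
    ultimately show ?thesis by simp
  next
    case False
    show ?thesis
    proof (cases "B' = I")
      case True
      obtain k where "k \<in> C" using C by auto
      then obtain i where "i \<in> I" "E i k" using nbrK C by blast
      then have "i \<in> Iof E I C" using \<open>k \<in> C\<close> by (auto simp: Iof_def)
      then show ?thesis using True B'_def \<open>i \<in> I\<close> by auto
    next
      case False2: False
      have "B' \<subset> I" using False2 B'_def by auto
      then have "sum lam B' < hI B'" using stab False by blast
      then show ?thesis using hB' lamB' by linarith
    qed
  qed
qed

lemma Jfam_iff: "A \<in> Jfam I K E \<longleftrightarrow> indep A \<and> A \<inter> I \<noteq> {} \<and> A \<inter> K \<noteq> {}"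
  by (auto simp: Jfam_def indep_def)

lemma J0fam_iff: "indep A \<Longrightarrow> A \<in> J0fam I K E \<longleftrightarrow> A = {} \<or> (A \<inter> I \<noteq> {} \<and> A \<inter> K \<noteq> {})"
  by (auto simp: J0fam_def Jfam_iff)

lemma indep_subset: "indep A \<Longrightarrow> B \<subseteq> A \<Longrightarrow> indep B"
  by (auto simp: indep_def)

lemma Delta_pos:
  assumes A: "A \<in> Jfam I K E"
  shows "sum lam (A \<inter> I) * sum mu (A \<inter> K) < hI (A \<inter> I) * hK (A \<inter> K)"
    "0 \<le> sum lam (A \<inter> I) * sum mu (A \<inter> K)"
proof -
  have ind: "indep A" and BI: "A \<inter> I \<noteq> {}" and CK: "A \<inter> K \<noteq> {}" using A Jfam_iff by auto
  obtain k where k: "k \<in> A \<inter> K" using CK by auto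
  then obtain i where i: "i \<in> I" "E i k" using nbrK by blast
  have "i \<notin> A" using i k ind by (auto simp: indep_def)
  then have Bs: "A \<inter> I \<subset> I" using i by auto
  obtain i' where i': "i' \<in> A \<inter> I" using BI by auto
  then obtain k' where k': "k' \<in> K" "E i' k'" using nbrI by blast
  have "k' \<notin> A" using i' k' ind by (auto simp: indep_def)
  then have Cs: "A \<inter> K \<subset> K" using k' by auto
  have l1: "sum lam (A \<inter> I) < hI (A \<inter> I)" using stab[OF BI Bs] .
  have l2: "sum mu (A \<inter> K) < hK (A \<inter> K)" using stabK[OF CK Cs] .
  have p1: "0 < sum lam (A \<inter> I)" using BI finI lam_pos by (intro sum_pos) auto
  have p2: "0 < sum mu (A \<inter> K)" using CK finK mu_pos by (intro sum_pos) auto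
  show "sum lam (A \<inter> I) * sum mu (A \<inter> K) < hI (A \<inter> I) * hK (A \<inter> K)"
    using l1 l2 p1 p2 by (intro mult_strict_mono) auto
  show "0 \<le> sum lam (A \<inter> I) * sum mu (A \<inter> K)" using p1 p2 by simp
qed

end


context model
begin

definition XX :: "nat \<Rightarrow> 'a set \<Rightarrow> real" where
  "XX n A = FF lam hI n (A \<inter> I) * FF mu hK n (A \<inter> K)"

definition Rf :: "'a set \<Rightarrow> ('a set \<Rightarrow> real) \<Rightarrow> real" where
  "Rf A g = sum mu (A \<inter> K) * (\<Sum>i\<in>A \<inter> I. lam i * g (A - {i}))
          + sum lam (A \<inter> I) * (\<Sum>k\<in>A \<inter> K. mu k * g (A - {k}))
          + (\<Sum>i\<in>A \<inter> I. \<Sum>k\<in>A \<inter> K. lam i * mu k * g (A - {i, k}))"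

lemma XX_nonneg: "0 \<le> XX n A"
proof -
  have "0 \<le> FF lam hI n (A \<inter> I)" using lam_pos hI_nonneg by (intro FF_nonneg) (auto intro: less_imp_le)
  moreover have "0 \<le> FF mu hK n (A \<inter> K)" using mu_pos hK_nonneg by (intro FF_nonneg) (auto intro: less_imp_le)
  ultimately show ?thesis by (simp add: XX_def)
qed

lemma XX_Suc_zero: "A \<inter> I = {} \<or> A \<inter> K = {} \<Longrightarrow> XX (Suc n) A = 0"
  by (auto simp: XX_def FF_Suc_empty)

lemma XX_0: "A \<subseteq> I \<union> K \<Longrightarrow> A \<noteq> {} \<Longrightarrow> XX 0 A = 0"
  by (auto simp: XX_def FF_0)

lemma suminf_sum_mult:
  fixes f :: "nat \<Rightarrow> 'b \<Rightarrow> real"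
  assumes "\<And>i. i \<in> S \<Longrightarrow> summable (\<lambda>n. f n i)"
  shows "(\<Sum>n. \<Sum>i\<in>S. c i * f n i) = (\<Sum>i\<in>S. c i * (\<Sum>n. f n i))"
proof -
  have "(\<Sum>n. \<Sum>i\<in>S. c i * f n i) = (\<Sum>i\<in>S. \<Sum>n. c i * f n i)"
    using assms by (intro suminf_sum summable_mult) auto
  also have "\<dots> = (\<Sum>i\<in>S. c i * (\<Sum>n. f n i))"
    using assms by (intro sum.cong refl suminf_mult) auto
  finally show ?thesis .
qed

lemma psub2: "x \<in> A \<Longrightarrow> A - {x, y} \<subset> A" by auto

lemma Rf_nonneg: assumes g: "\<And>S. S \<subset> A \<Longrightarrow> 0 \<le> g S" and "A \<subseteq> I \<union> K" shows "0 \<le> Rf A g"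
  unfolding Rf_def using lam_pos mu_pos assms
  by (intro add_nonneg_nonneg mult_nonneg_nonneg sum_nonneg) (auto intro: less_imp_le g psub2)

lemma Rf_cong: assumes g: "\<And>S. S \<subset> A \<Longrightarrow> g S = g' S" shows "Rf A g = Rf A g'"
  unfolding Rf_def by (intro arg_cong2[where f="(+)"] arg_cong2[where f="(*)"] sum.cong refl) (auto intro!: g psub2)

lemma Rf_mult: "c * Rf A g = Rf A (\<lambda>S. c * g S)"
  unfolding Rf_def by (simp add: algebra_simps sum_distrib_left)

lemma Rf_summable:
  assumes "\<And>S. S \<subset> A \<Longrightarrow> summable (\<lambda>n. f n S)"
  shows "summable (\<lambda>n. Rf A (f n))"
  unfolding Rf_def using assms
  by (intro summable_add summable_mult summable_sum) (auto intro!: assms psub2)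

lemma Rf_suminf:
  assumes "\<And>S. S \<subset> A \<Longrightarrow> summable (\<lambda>n. f n S)"
  shows "(\<Sum>n. Rf A (f n)) = Rf A (\<lambda>S. \<Sum>n. f n S)"
proof -
  have s1: "summable (\<lambda>n. sum mu (A \<inter> K) * (\<Sum>i\<in>A \<inter> I. lam i * f n (A - {i})))"
    using assms by (intro summable_mult summable_sum) (auto intro!: assms psub2)
  have s2: "summable (\<lambda>n. sum lam (A \<inter> I) * (\<Sum>k\<in>A \<inter> K. mu k * f n (A - {k})))"
    using assms by (intro summable_mult summable_sum) (auto intro!: assms psub2)
  have s3: "summable (\<lambda>n. (\<Sum>i\<in>A \<inter> I. \<Sum>k\<in>A \<inter> K. lam i * mu k * f n (A - {i, k})))"
    using assms by (intro summable_mult summable_sum) (auto intro!: assms psub2)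
  have "(\<Sum>n. Rf A (f n)) = (\<Sum>n. sum mu (A \<inter> K) * (\<Sum>i\<in>A \<inter> I. lam i * f n (A - {i})))
      + (\<Sum>n. sum lam (A \<inter> I) * (\<Sum>k\<in>A \<inter> K. mu k * f n (A - {k})))
      + (\<Sum>n. (\<Sum>i\<in>A \<inter> I. \<Sum>k\<in>A \<inter> K. lam i * mu k * f n (A - {i, k})))"
    unfolding Rf_def using s1 s2 s3 by (simp add: suminf_add summable_add)
  also have "\<dots> = Rf A (\<lambda>S. \<Sum>n. f n S)"
  proof -
    have a: "(\<Sum>n. sum mu (A \<inter> K) * (\<Sum>i\<in>A \<inter> I. lam i * f n (A - {i})))
        = sum mu (A \<inter> K) * (\<Sum>i\<in>A \<inter> I. lam i * (\<Sum>n. f n (A - {i})))"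
      using assms by (subst suminf_mult) (auto intro!: summable_sum summable_mult assms psub2 suminf_sum_mult[where f="\<lambda>n S. f n (A - {S})"])
    have b: "(\<Sum>n. sum lam (A \<inter> I) * (\<Sum>k\<in>A \<inter> K. mu k * f n (A - {k})))
        = sum lam (A \<inter> I) * (\<Sum>k\<in>A \<inter> K. mu k * (\<Sum>n. f n (A - {k})))"
      using assms by (subst suminf_mult) (auto intro!: summable_sum summable_mult assms psub2 suminf_sum_mult[where f="\<lambda>n S. f n (A - {S})"])
    have c: "(\<Sum>n. (\<Sum>i\<in>A \<inter> I. \<Sum>k\<in>A \<inter> K. lam i * mu k * f n (A - {i, k})))
        = (\<Sum>i\<in>A \<inter> I. \<Sum>k\<in>A \<inter> K. lam i * mu k * (\<Sum>n. f n (A - {i, k})))"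
    proof -
      have "(\<Sum>n. (\<Sum>i\<in>A \<inter> I. \<Sum>k\<in>A \<inter> K. lam i * mu k * f n (A - {i, k})))
          = (\<Sum>i\<in>A \<inter> I. \<Sum>n. \<Sum>k\<in>A \<inter> K. lam i * mu k * f n (A - {i, k}))"
        using assms by (intro suminf_sum) (auto intro!: summable_sum summable_mult assms psub2)
      also have "\<dots> = (\<Sum>i\<in>A \<inter> I. \<Sum>k\<in>A \<inter> K. \<Sum>n. lam i * mu k * f n (A - {i, k}))"
        using assms by (intro sum.cong refl suminf_sum) (auto intro!: summable_sum summable_mult assms psub2)
      also have "\<dots> = (\<Sum>i\<in>A \<inter> I. \<Sum>k\<in>A \<inter> K. lam i * mu k * (\<Sum>n. f n (A - {i, k})))"
        using assms by (intro sum.cong refl suminf_mult) (auto intro!: assms psub2)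
      finally show ?thesis .
    qed
    show ?thesis unfolding Rf_def a b c ..
  qed
  finally show ?thesis .
qed

end


context model
begin

lemma XX_rec:
  assumes A: "A \<in> Jfam I K E"
  shows "hI (A \<inter> I) * hK (A \<inter> K) * XX (Suc n) A
       = sum lam (A \<inter> I) * sum mu (A \<inter> K) * XX n A + Rf A (XX n)"
proof -
  define B where "B = A \<inter> I"
  define C where "C = A \<inter> K"
  define F where "F = FF lam hI n"
  define G where "G = FF mu hK n"
  have ind: "indep A" and BI: "B \<noteq> {}" and CK: "C \<noteq> {}" using A Jfam_iff B_def C_def by auto
  have finB: "finite B" using finI B_def by simp
  have finC: "finite C" using finK C_def by simp
  have fB: "hI B * FF lam hI (Suc n) B = (\<Sum>i\<in>B. lam i * (F B + F (B - {i})))"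
    unfolding F_def using finB hI_pos[of B] BI B_def by (intro FF_Suc_mult) auto
  have gC: "hK C * FF mu hK (Suc n) C = (\<Sum>k\<in>C. mu k * (G C + G (C - {k})))"
    unfolding G_def using finC hK_pos[of C] CK C_def by (intro FF_Suc_mult) auto
  have s1: "(\<Sum>i\<in>B. lam i * (F B + F (B - {i}))) = sum lam B * F B + (\<Sum>i\<in>B. lam i * F (B - {i}))"
  proof -
    have "(\<Sum>i\<in>B. lam i * (F B + F (B - {i}))) = (\<Sum>i\<in>B. lam i * F B) + (\<Sum>i\<in>B. lam i * F (B - {i}))"
      by (simp add: distrib_left sum.distrib)
    also have "(\<Sum>i\<in>B. lam i * F B) = sum lam B * F B" by (simp add: sum_distrib_right)
    finally show ?thesis .
  qed
  have s2: "(\<Sum>k\<in>C. mu k * (G C + G (C - {k}))) = sum mu C * G C + (\<Sum>k\<in>C. mu k * G (C - {k}))"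
  proof -
    have "(\<Sum>k\<in>C. mu k * (G C + G (C - {k}))) = (\<Sum>k\<in>C. mu k * G C) + (\<Sum>k\<in>C. mu k * G (C - {k}))"
      by (simp add: distrib_left sum.distrib)
    also have "(\<Sum>k\<in>C. mu k * G C) = sum mu C * G C" by (simp add: sum_distrib_right)
    finally show ?thesis .
  qed
  have x1: "XX n (A - {i}) = F (B - {i}) * G C" if "i \<in> B" for i
  proof -
    have "(A - {i}) \<inter> I = B - {i}" "(A - {i}) \<inter> K = C" using that disj B_def C_def by auto
    then show ?thesis by (simp add: XX_def F_def G_def)
  qed
  have x2: "XX n (A - {k}) = F B * G (C - {k})" if "k \<in> C" for k
  proof -
    have "(A - {k}) \<inter> I = B" "(A - {k}) \<inter> K = C - {k}" using that disj B_def C_def by auto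
    then show ?thesis by (simp add: XX_def F_def G_def)
  qed
  have x3: "XX n (A - {i, k}) = F (B - {i}) * G (C - {k})" if "i \<in> B" "k \<in> C" for i k
  proof -
    have "(A - {i, k}) \<inter> I = B - {i}" "(A - {i, k}) \<inter> K = C - {k}" using that disj B_def C_def by auto
    then show ?thesis by (simp add: XX_def F_def G_def)
  qed
  have R: "Rf A (XX n) = sum mu C * ((\<Sum>i\<in>B. lam i * F (B - {i})) * G C)
      + sum lam B * (F B * (\<Sum>k\<in>C. mu k * G (C - {k})))
      + (\<Sum>i\<in>B. lam i * F (B - {i})) * (\<Sum>k\<in>C. mu k * G (C - {k}))"
  proof -
    have a: "(\<Sum>i\<in>B. lam i * XX n (A - {i})) = (\<Sum>i\<in>B. lam i * F (B - {i})) * G C"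
      by (simp add: x1 sum_distrib_right mult.assoc)
    have b: "(\<Sum>k\<in>C. mu k * XX n (A - {k})) = F B * (\<Sum>k\<in>C. mu k * G (C - {k}))"
      by (simp add: x2 sum_distrib_left algebra_simps)
    have c: "(\<Sum>i\<in>B. \<Sum>k\<in>C. lam i * mu k * XX n (A - {i, k}))
        = (\<Sum>i\<in>B. lam i * F (B - {i})) * (\<Sum>k\<in>C. mu k * G (C - {k}))"
      by (simp add: x3 sum_product algebra_simps)
    show ?thesis unfolding Rf_def B_def[symmetric] C_def[symmetric] a b c ..
  qed
  have "hI B * hK C * XX (Suc n) A = (hI B * FF lam hI (Suc n) B) * (hK C * FF mu hK (Suc n) C)"
    by (simp add: XX_def B_def C_def)
  also have "\<dots> = (sum lam B * F B + (\<Sum>i\<in>B. lam i * F (B - {i}))) * (sum mu C * G C + (\<Sum>k\<in>C. mu k * G (C - {k})))"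
    using fB gC s1 s2 by simp
  also have "\<dots> = sum lam B * sum mu C * XX n A + Rf A (XX n)"
    unfolding R by (simp add: XX_def B_def[symmetric] C_def[symmetric] F_def[symmetric] G_def[symmetric] algebra_simps)
  finally show ?thesis unfolding B_def C_def .
qed

lemma XX_summable:
  assumes "indep A"
  shows "summable (\<lambda>n. XX n A) \<and> summable (\<lambda>n. real n * XX n A)"
proof -
  have "finite A" using assms finI finK unfolding indep_def by (metis finite_Un finite_subset)
  then show ?thesis using assms
  proof (induction A rule: finite_psubset_induct)
    case (psubset A)
    show ?case
    proof (cases "A \<in> Jfam I K E")
      case False
      then have z: "A \<inter> I = {} \<or> A \<inter> K = {}" using psubset.prems Jfam_iff by auto
      have a: "summable (\<lambda>n. XX (n + 1) A)" using XX_Suc_zero[OF z] by simp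
      have b: "summable (\<lambda>n. real (n + 1) * XX (n + 1) A)" using XX_Suc_zero[OF z] by simp
      show ?thesis using summable_iff_shift[of "\<lambda>n. XX n A" 1, THEN iffD1, OF a]
          summable_iff_shift[of "\<lambda>n. real n * XX n A" 1, THEN iffD1, OF b] by blast
    next
      case True
      have IH: "summable (\<lambda>n. XX n S) \<and> summable (\<lambda>n. real n * XX n S)" if "S \<subset> A" for S
        using psubset.IH[OF that] indep_subset[OF psubset.prems] that by auto
      have x0: "XX 0 A = 0" using True Jfam_iff indep_def by (intro XX_0) auto
      have AIK: "A \<subseteq> I \<union> K" using psubset.prems indep_def by auto
      have R0: "0 \<le> Rf A (XX n)" for n
        by (rule Rf_nonneg[OF XX_nonneg AIK])
      have sR: "summable (\<lambda>n. Rf A (XX n))"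
        by (rule Rf_summable) (use IH in blast)
      have nR: "(\<lambda>n. real n * Rf A (XX n)) = (\<lambda>n. Rf A (\<lambda>S. real n * XX n S))"
        by (simp add: Rf_mult)
      have snR: "summable (\<lambda>n. real n * Rf A (XX n))"
        unfolding nR by (rule Rf_summable[where f="\<lambda>n S. real n * XX n S"]) (use IH in blast)
      note gg = geo2[where R="\<lambda>n. Rf A (XX n)", OF XX_nonneg R0 x0 XX_rec[OF True]
          Delta_pos(2)[OF True] Delta_pos(1)[OF True] sR snR]
      have g: "summable (\<lambda>n. XX n A)" "summable (\<lambda>n. real n * XX n A)" by (rule gg(1), rule gg(2))
      then show ?thesis by simp
    qed
  qed
qed

end


context model
begin

definition PP :: "'a set \<Rightarrow> real" where "PP A = (\<Sum>n. XX n A)"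
definition LL :: "'a set \<Rightarrow> real" where "LL A = (\<Sum>n. real n * XX n A)"

lemma LL_rec:
  assumes A: "A \<in> Jfam I K E"
  shows "(hI (A \<inter> I) * hK (A \<inter> K) - sum lam (A \<inter> I) * sum mu (A \<inter> K)) * LL A
      = hI (A \<inter> I) * hK (A \<inter> K) * PP A + Rf A LL"
proof -
  have ind: "indep A" using A Jfam_iff by auto
  have IH: "summable (\<lambda>n. XX n S) \<and> summable (\<lambda>n. real n * XX n S)" if "S \<subset> A" for S
    using XX_summable indep_subset[OF ind] that by auto
  have AIK: "A \<subseteq> I \<union> K" using ind indep_def by auto
  have x0: "XX 0 A = 0" using A Jfam_iff indep_def by (intro XX_0) auto
  have R0: "0 \<le> Rf A (XX n)" for n
    by (rule Rf_nonneg[OF XX_nonneg AIK])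
  have sR: "summable (\<lambda>n. Rf A (XX n))"
    by (rule Rf_summable) (use IH in blast)
  have nR: "(\<lambda>n. real n * Rf A (XX n)) = (\<lambda>n. Rf A (\<lambda>S. real n * XX n S))"
    by (simp add: Rf_mult)
  have snR: "summable (\<lambda>n. real n * Rf A (XX n))"
    unfolding nR by (rule Rf_summable[where f="\<lambda>n S. real n * XX n S"]) (use IH in blast)
  note gg = geo2[where R="\<lambda>n. Rf A (XX n)", OF XX_nonneg R0 x0 XX_rec[OF A]
      Delta_pos(2)[OF A] Delta_pos(1)[OF A] sR snR]
  have "(\<Sum>n. real n * Rf A (XX n)) = Rf A LL"
    unfolding nR LL_def by (rule Rf_suminf[where f="\<lambda>n S. real n * XX n S"]) (use IH in blast)
  then show ?thesis using gg(4) unfolding PP_def LL_def by simp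
qed

lemma LL_zero: assumes "A \<inter> I = {} \<or> A \<inter> K = {}" shows "LL A = 0"
proof -
  have "(\<lambda>n. real n * XX n A) = (\<lambda>n. 0)"
  proof
    fix n show "real n * XX n A = 0" using XX_Suc_zero[OF assms] by (cases n) auto
  qed
  then show ?thesis unfolding LL_def by simp
qed

lemma pi_un_prod:
  assumes "length c = length d"
  shows "pi_un I K E lam mu (c, d) = fw lam hI c * fw mu hK d"
  using assms by (simp only: pi_un_def fw_def prod.case prod.distrib[symmetric])

lemma slice_eq:
  assumes "indep A"
  shows "{s \<in> states_of I K E A. length (fst s) = n} = lists_eq n (A \<inter> I) \<times> lists_eq n (A \<inter> K)"
  using assms unfolding states_of_def states_def lists_eq_def indep_def by auto

lemma sum_slice:
  assumes "indep A"
  shows "sum (pi_un I K E lam mu) {s \<in> states_of I K E A. length (fst s) = n} = XX n A"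
    "sum (\<lambda>s. real (length (fst s)) * pi_un I K E lam mu s) {s \<in> states_of I K E A. length (fst s) = n}
       = real n * XX n A"
proof -
  have "sum (pi_un I K E lam mu) (lists_eq n (A \<inter> I) \<times> lists_eq n (A \<inter> K))
      = (\<Sum>c\<in>lists_eq n (A \<inter> I). \<Sum>d\<in>lists_eq n (A \<inter> K). pi_un I K E lam mu (c, d))"
    by (simp add: sum.cartesian_product)
  also have "\<dots> = (\<Sum>c\<in>lists_eq n (A \<inter> I). \<Sum>d\<in>lists_eq n (A \<inter> K). fw lam hI c * fw mu hK d)"
    by (intro sum.cong refl pi_un_prod) (auto simp: lists_eq_def)
  also have "\<dots> = XX n A" by (simp add: XX_def FF_def sum_product)
  finally show s1: "sum (pi_un I K E lam mu) {s \<in> states_of I K E A. length (fst s) = n} = XX n A"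
    using slice_eq[OF assms] by simp
  have "sum (\<lambda>s. real (length (fst s)) * pi_un I K E lam mu s) {s \<in> states_of I K E A. length (fst s) = n}
      = sum (\<lambda>s. real n * pi_un I K E lam mu s) {s \<in> states_of I K E A. length (fst s) = n}"
    by (intro sum.cong refl) auto
  also have "\<dots> = real n * XX n A" using s1 by (simp add: sum_distrib_left[symmetric])
  finally show "sum (\<lambda>s. real (length (fst s)) * pi_un I K E lam mu s) {s \<in> states_of I K E A. length (fst s) = n}
       = real n * XX n A" .
qed

lemma pi_un_nonneg: "s \<in> states I K E \<Longrightarrow> 0 \<le> pi_un I K E lam mu s"
proof -
  assume s: "s \<in> states I K E"
  obtain c d where cd: "s = (c, d)" by (cases s)
  have l: "length c = length d" "set c \<subseteq> I" "set d \<subseteq> K" using s cd by (auto simp: states_def)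
  have "0 \<le> fw lam hI c" using l lam_pos hI_nonneg by (intro fw_nonneg[of c I]) (auto intro: less_imp_le)
  moreover have "0 \<le> fw mu hK d" using l mu_pos hK_nonneg by (intro fw_nonneg[of d K]) (auto intro: less_imp_le)
  ultimately show ?thesis using cd pi_un_prod[OF l(1)] by simp
qed

lemma has_sum_states_of:
  assumes ind: "indep A"
  shows "(pi_un I K E lam mu has_sum PP A) (states_of I K E A)"
    "((\<lambda>s. real (length (fst s)) * pi_un I K E lam mu s) has_sum LL A) (states_of I K E A)"
proof -
  define T where "T n = {s \<in> states_of I K E A. length (fst s) = n}" for n
  have fin: "finite (T n)" for n
  proof -
    have "finite (A \<inter> I)" "finite (A \<inter> K)" using finI finK by auto
    then show ?thesis unfolding T_def slice_eq[OF ind] by (simp add: finite_lists_eq)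
  qed
  have dj: "T m \<inter> T n = {}" if "m \<noteq> n" for m n using that by (auto simp: T_def)
  have S: "states_of I K E A = (\<Union>n. T n)" by (auto simp: T_def)
  have nn: "0 \<le> pi_un I K E lam mu s" if "s \<in> states_of I K E A" for s
    using that pi_un_nonneg by (auto simp: states_of_def)
  have sm: "summable (\<lambda>n. XX n A)" "summable (\<lambda>n. real n * XX n A)" using XX_summable[OF ind] by auto
  show "(pi_un I K E lam mu has_sum PP A) (states_of I K E A)"
  proof (rule has_sum_slices[OF nn fin dj S])
    show "(\<lambda>n. sum (pi_un I K E lam mu) (T n)) sums PP A"
      unfolding T_def sum_slice[OF ind] PP_def using sm(1) by (rule summable_sums)
  qed
  show "((\<lambda>s. real (length (fst s)) * pi_un I K E lam mu s) has_sum LL A) (states_of I K E A)"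
  proof (rule has_sum_slices[OF _ fin dj S])
    show "0 \<le> real (length (fst s)) * pi_un I K E lam mu s" if "s \<in> states_of I K E A" for s
      using nn[OF that] by simp
    show "(\<lambda>n. sum (\<lambda>s. real (length (fst s)) * pi_un I K E lam mu s) (T n)) sums LL A"
      unfolding T_def sum_slice[OF ind] LL_def using sm(2) by (rule summable_sums)
  qed
qed

end


context model
begin

abbreviation "Z \<equiv> (\<Sum>\<^sub>\<infinity> t\<in>states I K E. pi_un I K E lam mu t)"

lemma J0_indep: "A \<in> J0fam I K E \<Longrightarrow> indep A"
  by (auto simp: J0fam_def Jfam_iff indep_def)

lemma ell_has_sum:
  assumes "A \<in> J0fam I K E"
  shows "((\<lambda>s. real (length (fst s)) * pi_st I K E lam mu s) has_sum ell_I I K E lam mu A) (states_of I K E A)"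
    "ell_I I K E lam mu A = LL A / Z"
proof -
  have h: "((\<lambda>s. real (length (fst s)) * pi_st I K E lam mu s) has_sum LL A / Z) (states_of I K E A)"
    using has_sum_divide_const[OF has_sum_states_of(2)[OF J0_indep[OF assms]], of Z]
    by (simp add: pi_st_def)
  then have "ell_I I K E lam mu A = LL A / Z" using assms by (simp add: ell_I_def infsumI)
  then show "ell_I I K E lam mu A = LL A / Z"
    "((\<lambda>s. real (length (fst s)) * pi_st I K E lam mu s) has_sum ell_I I K E lam mu A) (states_of I K E A)"
    using h by auto
qed

lemma ell_eq: assumes "indep A" shows "ell_I I K E lam mu A = LL A / Z"
proof (cases "A \<in> J0fam I K E")
  case True then show ?thesis by (rule ell_has_sum(2))
next
  case False
  then have "A \<inter> I = {} \<or> A \<inter> K = {}" using J0fam_iff[OF assms] by auto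
  then show ?thesis using False by (simp add: ell_I_def LL_zero)
qed

lemma pi_set_eq: assumes "A \<in> Jfam I K E" shows "pi_set I K E lam mu A = PP A / Z"
proof -
  have A0: "A \<in> J0fam I K E" using assms by (simp add: J0fam_def)
  have "((\<lambda>s. pi_st I K E lam mu s) has_sum PP A / Z) (states_of I K E A)"
    using has_sum_divide_const[OF has_sum_states_of(1)[OF J0_indep[OF A0]], of Z]
    by (simp add: pi_st_def)
  then show ?thesis using A0 by (simp add: pi_set_def infsumI)
qed

lemma states_Union: "states I K E = (\<Union>A\<in>J0fam I K E. states_of I K E A)"
proof
  show "(\<Union>A\<in>J0fam I K E. states_of I K E A) \<subseteq> states I K E" by (auto simp: states_of_def)
next
  show "states I K E \<subseteq> (\<Union>A\<in>J0fam I K E. states_of I K E A)"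
  proof
    fix s assume s: "s \<in> states I K E"
    obtain c d where cd: "s = (c, d)" by (cases s)
    have l: "length c = length d" "set c \<subseteq> I" "set d \<subseteq> K" "\<forall>p\<in>set c. \<forall>q\<in>set d. \<not> E p q"
      using s cd by (auto simp: states_def)
    define A where "A = set c \<union> set d"
    have AI: "A \<inter> I = set c" using l disj by (auto simp: A_def)
    have AK: "A \<inter> K = set d" using l disj by (auto simp: A_def)
    have ind: "indep A"
      unfolding indep_def
    proof (intro conjI ballI)
      show "A \<subseteq> I \<union> K" using l A_def by auto
      fix x y assume xy: "x \<in> A" "y \<in> A"
      show "\<not> E x y"
      proof
        assume e: "E x y"
        then have "x \<in> I" "y \<in> K" using bip by auto
        then have "x \<in> set c" "y \<in> set d" using xy AI AK by auto
        then show False using l(4) e by auto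
      qed
    qed
    have "A \<in> J0fam I K E"
    proof (cases "c = []")
      case True then have "d = []" using l by simp
      then show ?thesis using True by (simp add: A_def J0fam_def)
    next
      case False then have "d \<noteq> []" using l by auto
      then show ?thesis using False J0fam_iff[OF ind] AI AK by auto
    qed
    moreover have "s \<in> states_of I K E A" using s cd AI AK by (simp add: states_of_def)
    ultimately show "s \<in> (\<Union>A\<in>J0fam I K E. states_of I K E A)" by blast
  qed
qed

lemma main:
  shows "(\<lambda>s. real (length (fst s)) * pi_st I K E lam mu s) summable_on states I K E
    \<and> L_I I K E lam mu = (\<Sum>A\<in>J0fam I K E. ell_I I K E lam mu A)
    \<and> ell_I I K E lam mu {} = 0
    \<and> (\<forall>A\<in>Jfam I K E.
         Delta I K E lam mu A * ell_I I K E lam mu A =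
           sum mu (Kof E K (A \<inter> I)) * sum lam (Iof E I (A \<inter> K)) * pi_set I K E lam mu A
         + sum mu (A \<inter> K) * (\<Sum>i\<in>A \<inter> I. lam i * ell_I I K E lam mu (A - {i}))
         + sum lam (A \<inter> I) * (\<Sum>k\<in>A \<inter> K. mu k * ell_I I K E lam mu (A - {k}))
         + (\<Sum>i\<in>A \<inter> I. \<Sum>k\<in>A \<inter> K. lam i * mu k * ell_I I K E lam mu (A - {i, k})))"
proof -
  have finJ0: "finite (J0fam I K E)"
  proof -
    have "J0fam I K E \<subseteq> Pow (I \<union> K)" by (auto simp: J0fam_def Jfam_def)
    then show ?thesis using finI finK by (meson finite_Pow_iff finite_UnI finite_subset)
  qed
  have dj: "states_of I K E A \<inter> states_of I K E A' = {}"
    if "A \<in> J0fam I K E" "A' \<in> J0fam I K E" "A \<noteq> A'" for A A'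
  proof -
    have "A \<subseteq> I \<union> K" "A' \<subseteq> I \<union> K" using J0_indep that indep_def by auto
    then have "A = (A \<inter> I) \<union> (A \<inter> K)" "A' = (A' \<inter> I) \<union> (A' \<inter> K)" by auto
    then show ?thesis using that(3) by (auto simp: states_of_def)
  qed
  have hs: "((\<lambda>s. real (length (fst s)) * pi_st I K E lam mu s) has_sum (\<Sum>A\<in>J0fam I K E. ell_I I K E lam mu A))
      (states I K E)"
    unfolding states_Union using finJ0 ell_has_sum(1) dj by (intro sum_has_sum) auto
  have P1: "(\<lambda>s. real (length (fst s)) * pi_st I K E lam mu s) summable_on states I K E"
    using hs by (auto simp: summable_on_def)
  have P2: "L_I I K E lam mu = (\<Sum>A\<in>J0fam I K E. ell_I I K E lam mu A)"
    using hs by (simp add: L_I_def infsumI)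
  have P3: "ell_I I K E lam mu {} = 0"
    using ell_eq[of "{}"] LL_zero[of "{}"] by (simp add: indep_def)
  have P4: "Delta I K E lam mu A * ell_I I K E lam mu A =
           sum mu (Kof E K (A \<inter> I)) * sum lam (Iof E I (A \<inter> K)) * pi_set I K E lam mu A
         + sum mu (A \<inter> K) * (\<Sum>i\<in>A \<inter> I. lam i * ell_I I K E lam mu (A - {i}))
         + sum lam (A \<inter> I) * (\<Sum>k\<in>A \<inter> K. mu k * ell_I I K E lam mu (A - {k}))
         + (\<Sum>i\<in>A \<inter> I. \<Sum>k\<in>A \<inter> K. lam i * mu k * ell_I I K E lam mu (A - {i, k}))"
    if A: "A \<in> Jfam I K E" for A
  proof -
    have ind: "indep A" using A Jfam_iff by auto
    have rf: "Rf A (ell_I I K E lam mu) = Rf A (\<lambda>S. (1 / Z) * LL S)"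
      by (rule Rf_cong) (use ell_eq indep_subset[OF ind] in auto)
    have "Delta I K E lam mu A * ell_I I K E lam mu A
        = (1 / Z) * ((hI (A \<inter> I) * hK (A \<inter> K) - sum lam (A \<inter> I) * sum mu (A \<inter> K)) * LL A)"
      using ell_eq[OF ind] by (simp add: Delta_def)
    also have "\<dots> = (1 / Z) * (hI (A \<inter> I) * hK (A \<inter> K) * PP A + Rf A LL)"
      using LL_rec[OF A] by simp
    also have "\<dots> = hI (A \<inter> I) * hK (A \<inter> K) * pi_set I K E lam mu A + Rf A (ell_I I K E lam mu)"
      unfolding rf Rf_mult[symmetric] pi_set_eq[OF A] by (simp add: algebra_simps)
    finally show ?thesis unfolding Rf_def by (simp add: add.assoc)
  qed
  show ?thesis using P1 P2 P3 P4 by blast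
qed

end

theorem proposition3:
  fixes I K :: "'a set" and E :: "'a \<Rightarrow> 'a \<Rightarrow> bool" and lam mu :: "'a \<Rightarrow> real"
  assumes finI: "finite I" and finK: "finite K"
    and neI: "I \<noteq> {}" and neK: "K \<noteq> {}" and disj: "I \<inter> K = {}"
    and bip: "\<And>x y. E x y \<Longrightarrow> x \<in> I \<and> y \<in> K"
    and conn: "\<And>x y. x \<in> I \<union> K \<Longrightarrow> y \<in> I \<union> K \<Longrightarrow> (\<lambda>u v. E u v \<or> E v u)\<^sup>*\<^sup>* x y"
    and lam_pos: "\<And>i. i \<in> I \<Longrightarrow> lam i > 0" and mu_pos: "\<And>k. k \<in> K \<Longrightarrow> mu k > 0"
    and lam_sum: "sum lam I = 1" and mu_sum: "sum mu K = 1"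
    and stab: "\<And>A. A \<noteq> {} \<Longrightarrow> A \<subset> I \<Longrightarrow> sum lam A < sum mu (Kof E K A)"
  shows "(\<lambda>s. real (length (fst s)) * pi_st I K E lam mu s) summable_on states I K E
    \<and> L_I I K E lam mu = (\<Sum>A\<in>J0fam I K E. ell_I I K E lam mu A)
    \<and> ell_I I K E lam mu {} = 0
    \<and> (\<forall>A\<in>Jfam I K E.
         Delta I K E lam mu A * ell_I I K E lam mu A =
           sum mu (Kof E K (A \<inter> I)) * sum lam (Iof E I (A \<inter> K)) * pi_set I K E lam mu A
         + sum mu (A \<inter> K) * (\<Sum>i\<in>A \<inter> I. lam i * ell_I I K E lam mu (A - {i}))
         + sum lam (A \<inter> I) * (\<Sum>k\<in>A \<inter> K. mu k * ell_I I K E lam mu (A - {k}))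
         + (\<Sum>i\<in>A \<inter> I. \<Sum>k\<in>A \<inter> K. lam i * mu k * ell_I I K E lam mu (A - {i, k})))"
proof -
  interpret model I K E lam mu
    using assms by unfold_locales auto
  show ?thesis by (rule main)
qed


end
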